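(* Let $0\le k,l\le N$ be integers and $a,b,c,d,q$ generic. Then $$R_k^l(a,b,c,d;N;q)=\sum_{P}\ \prod_{\text{early right}}\frac{(1-q^{x+2y}ad)(1-q^{x}a/d)}{(1-q^{x+y}cd)(1-q^{x-y}c/d)}\prod_{\text{early up}}\frac{(1-q^{2x+y}ac)(1-q^{y}a/c)}{(1-q^{x+y}cd)(1-q^{y-x}d/c)}$$ $$\times\prod_{\text{late right}}\frac{(1-q^{x+2y-k}bd)(1-q^{x-k}b/d)}{(1-q^{x+y}cd)(1-q^{x-y}c/d)}\prod_{\text{late up}}\frac{(1-q^{2x+y-k}bc)(1-q^{y-k}b/c)}{(1-q^{x+y}cd)(1-q^{y-x}d/c)},$$ where the sum is over all lattice paths $P$ from $(0,0)$ to $(l,N-l)$ with unit steps right $(1,0)$ or up $(0,1)$; the products run over the steps of $P$, the first $k$ steps being called "early" and the remaining $N-k$ "late"; and in each factor $(x,y)$ is the starting point of the corresponding step.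
   Context: $h_k(x;a)=\prod_{j=0}^{k-1}(1-axq^j+a^2q^{2j})$. For generic parameters, $R_k^l(a,b,c,d;N;q)$ are the unique coefficients with $h_k(x;a)h_{N-k}(x;b)=\sum_{l=0}^N R_k^l(a,b,c,d;N;q)\,h_l(x;c)h_{N-l}(x;d)$ as polynomials in $x$. *)

theory Defs
  imports "HOL-Computational_Algebra.Polynomial" Complex_Main
begin

definition hpoly :: "nat \<Rightarrow> complex \<Rightarrow> complex \<Rightarrow> complex poly" where
  "hpoly k a q = (\<Prod>j<k. [: 1 + a^2 * q^(2*j), - a * q^j :])"

definition Rbasis :: "complex \<Rightarrow> complex \<Rightarrow> nat \<Rightarrow> complex \<Rightarrow> nat \<Rightarrow> complex poly" where
  "Rbasis c d N q l = hpoly l c q * hpoly (N - l) d q"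

text \<open>The coefficient vector (indexed by l in {0..N}, zero elsewhere) of the expansion of
  h_k(x;a) h_{N-k}(x;b) in the basis above; meaningful when these coefficients are unique.\<close>
definition Rcoeffs :: "complex \<Rightarrow> complex \<Rightarrow> complex \<Rightarrow> complex \<Rightarrow> nat \<Rightarrow> complex \<Rightarrow> nat \<Rightarrow> (nat \<Rightarrow> complex)" where
  "Rcoeffs a b c d N q k = (THE r. (\<forall>l>N. r l = 0) \<and>
      hpoly k a q * hpoly (N - k) b q = (\<Sum>l\<le>N. smult (r l) (Rbasis c d N q l)))"

definition R :: "nat \<Rightarrow> nat \<Rightarrow> complex \<Rightarrow> complex \<Rightarrow> complex \<Rightarrow> complex \<Rightarrow> nat \<Rightarrow> complex \<Rightarrow> complex" where
  "R k l a b c d N q = Rcoeffs a b c d N q k l"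

text \<open>Lattice paths from (0,0) to (l, N-l): lists of N steps, True = right (1,0), False = up (0,1).\<close>
definition paths :: "nat \<Rightarrow> nat \<Rightarrow> bool list set" where
  "paths N l = {P. length P = N \<and> length (filter id P) = l}"

definition sx :: "bool list \<Rightarrow> nat \<Rightarrow> int" where
  "sx P i = int (length (filter id (take i P)))"
definition sy :: "bool list \<Rightarrow> nat \<Rightarrow> int" where
  "sy P i = int i - sx P i"

definition step_wt :: "complex \<Rightarrow> complex \<Rightarrow> complex \<Rightarrow> complex \<Rightarrow> complex \<Rightarrow> nat \<Rightarrow> bool \<Rightarrow> bool \<Rightarrow> int \<Rightarrow> int \<Rightarrow> complex" where
  "step_wt a b c d q k early right x y =
    (if early then
       (if right then
          ((1 - q powi (x + 2*y) * a * d) * (1 - q powi x * a / d)) /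
          ((1 - q powi (x + y) * c * d) * (1 - q powi (x - y) * c / d))
        else
          ((1 - q powi (2*x + y) * a * c) * (1 - q powi y * a / c)) /
          ((1 - q powi (x + y) * c * d) * (1 - q powi (y - x) * d / c)))
     else
       (if right then
          ((1 - q powi (x + 2*y - int k) * b * d) * (1 - q powi (x - int k) * b / d)) /
          ((1 - q powi (x + y) * c * d) * (1 - q powi (x - y) * c / d))
        else
          ((1 - q powi (2*x + y - int k) * b * c) * (1 - q powi (y - int k) * b / c)) /
          ((1 - q powi (x + y) * c * d) * (1 - q powi (y - x) * d / c))))"

definition path_wt :: "complex \<Rightarrow> complex \<Rightarrow> complex \<Rightarrow> complex \<Rightarrow> complex \<Rightarrow> nat \<Rightarrow> bool list \<Rightarrow> complex" where
  "path_wt a b c d q k P =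
     (\<Prod>i<length P. step_wt a b c d q k (i < k) (P ! i) (sx P i) (sy P i))"

end

theory Submission imports Defs begin

lemma lin_step:
  fixes e u v :: complex
  assumes "u \<noteq> 0" "v \<noteq> 0" "1 - u*v \<noteq> 0" "1 - u/v \<noteq> 0" "1 - v/u \<noteq> 0"
  shows "[:1+e^2, -e:] = smult ((1-e*v)*(1-e/v)/((1-u*v)*(1-u/v))) [:1+u^2,-u:]
          + smult ((1-e*u)*(1-e/u)/((1-u*v)*(1-v/u))) [:1+v^2,-v:]"
proof -
  have uv: "v - u \<noteq> 0" "u - v \<noteq> 0" using assms by (auto simp: field_simps)
  have D: "(1-u*v)*(v-u) \<noteq> 0" using assms uv by simp
  have r: "1-e/v = (v-e)/v" "1-u/v = (v-u)/v" "1-e/u = (u-e)/u" "1-v/u = (u-v)/u"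
    using assms by (simp_all add: field_simps)
  have g: "\<And>X Y Z W w::complex. w \<noteq> 0 \<Longrightarrow> X*(Y/w)/(Z*(W/w)) = X*Y/(Z*W)"
    by (simp add: field_simps)
  have a1: "(1-e*v)*(1-e/v)/((1-u*v)*(1-u/v)) = (1-e*v)*(v-e)/((1-u*v)*(v-u))"
    unfolding r using assms g by simp
  have b1: "(1-e*u)*(1-e/u)/((1-u*v)*(1-v/u)) = (1-e*u)*(u-e)/((1-u*v)*(u-v))"
    unfolding r using assms g by simp
  have D2: "(1-u*v)*(u-v) = - ((1-u*v)*(v-u))" by algebra
  have gen: "\<And>X Y Z P Q DD::complex. DD \<noteq> 0 \<Longrightarrow> X*P - Y*Q = Z*DD \<Longrightarrow> Z = X/DD*P + Y/(-DD)*Q"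
    by (simp add: field_simps)
  have A: "1+e^2 = (1-e*v)*(v-e)/((1-u*v)*(v-u)) * (1+u^2) + (1-e*u)*(u-e)/(-((1-u*v)*(v-u))) * (1+v^2)"
    by (rule gen[OF D]) algebra
  have B: "-e = (1-e*v)*(v-e)/((1-u*v)*(v-u)) * (-u) + (1-e*u)*(u-e)/(-((1-u*v)*(v-u))) * (-v)"
    by (rule gen[OF D]) algebra
  show ?thesis unfolding a1 b1 D2 using A B by simp
qed

definition EE :: "complex \<Rightarrow> complex \<Rightarrow> complex \<Rightarrow> nat \<Rightarrow> nat \<Rightarrow> complex" where
  "EE a b q k n = (if n < k then a * q^n else b * q^(n-k))"

lemma powi_diff_nat: "(q::complex) \<noteq> 0 \<Longrightarrow> q powi (int m - int j) = q^m / q^j"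
  by (simp add: power_int_diff)

lemma wt_lemma:
  assumes q: "q \<noteq> 0" and c: "c \<noteq> 0" and d: "d \<noteq> 0"
  shows "step_wt a b c d q k (x+y<k) True (int x) (int y) =
      (1-EE a b q k (x+y)*(d*q^y))*(1-EE a b q k (x+y)/(d*q^y))/((1-(c*q^x)*(d*q^y))*(1-(c*q^x)/(d*q^y)))"
   and "step_wt a b c d q k (x+y<k) False (int x) (int y) =
      (1-EE a b q k (x+y)*(c*q^x))*(1-EE a b q k (x+y)/(c*q^x))/((1-(c*q^x)*(d*q^y))*(1-(d*q^y)/(c*q^x)))"
proof -
  have den1: "q powi (int x + int y) * c * d = (c*q^x)*(d*q^y)"
    by (simp add: power_add flip: of_nat_add)
  have den2: "q powi (int x - int y) * c / d = (c*q^x)/(d*q^y)"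
    using q by (simp add: powi_diff_nat mult_ac)
  have den3: "q powi (int y - int x) * d / c = (d*q^y)/(c*q^x)"
    using q by (simp add: powi_diff_nat mult_ac)
  have "step_wt a b c d q k (x+y<k) True (int x) (int y) =
      (1-EE a b q k (x+y)*(d*q^y))*(1-EE a b q k (x+y)/(d*q^y))/((1-(c*q^x)*(d*q^y))*(1-(c*q^x)/(d*q^y)))
    \<and> step_wt a b c d q k (x+y<k) False (int x) (int y) =
      (1-EE a b q k (x+y)*(c*q^x))*(1-EE a b q k (x+y)/(c*q^x))/((1-(c*q^x)*(d*q^y))*(1-(d*q^y)/(c*q^x)))"
  proof (cases "x+y<k")
    case True
    have n1: "q powi (int x + 2 * int y) * a * d = a*q^(x+y)*(d*q^y)"
      proof - have h: "int x + 2 * int y = int (x+y+y)" by simp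
        show ?thesis unfolding h power_int_of_nat by (simp add: power_add mult_2 mult_ac) qed
    have n2: "q powi int x * a / d = a*q^(x+y)/(d*q^y)"
      using q d by (simp add: power_add field_simps)
    have n3: "q powi (2 * int x + int y) * a * c = a*q^(x+y)*(c*q^x)"
      proof - have h: "2 * int x + int y = int (x+y+x)" by simp
        show ?thesis unfolding h power_int_of_nat by (simp add: power_add mult_2 mult_ac) qed
    have n4: "q powi int y * a / c = a*q^(x+y)/(c*q^x)"
      using q c by (simp add: power_add field_simps)
    show ?thesis using True unfolding step_wt_def EE_def
      by (simp only: if_True n1 n2 n3 n4 den1 den2 den3 if_False)
  next
    case False
    have n1: "q powi (int x + 2 * int y - int k) * b * d = b*q^(x+y-k)*(d*q^y)"
      proof - have h: "int x + 2 * int y - int k = int (x+y-k+y)" using False by simp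
        show ?thesis unfolding h power_int_of_nat by (simp add: power_add mult_ac) qed
    have n2: "q powi (int x - int k) * b / d = b*q^(x+y-k)/(d*q^y)"
      proof - have h: "int x - int k = int (x+y-k) - int y" using False by simp
        show ?thesis unfolding h powi_diff_nat[OF q] using d by (simp add: field_simps) qed
    have n3: "q powi (2 * int x + int y - int k) * b * c = b*q^(x+y-k)*(c*q^x)"
      proof - have h: "2 * int x + int y - int k = int (x+y-k+x)" using False by simp
        show ?thesis unfolding h power_int_of_nat by (simp add: power_add mult_ac) qed
    have n4: "q powi (int y - int k) * b / c = b*q^(x+y-k)/(c*q^x)"
      proof - have h: "int y - int k = int (x+y-k) - int x" using False by simp
        show ?thesis unfolding h powi_diff_nat[OF q] using c by (simp add: field_simps) qed
    show ?thesis using False unfolding step_wt_def EE_def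
      by (simp only: if_True n1 n2 n3 n4 den1 den2 den3 if_False)
  qed
  then show "step_wt a b c d q k (x+y<k) True (int x) (int y) =
      (1-EE a b q k (x+y)*(d*q^y))*(1-EE a b q k (x+y)/(d*q^y))/((1-(c*q^x)*(d*q^y))*(1-(c*q^x)/(d*q^y)))"
   and "step_wt a b c d q k (x+y<k) False (int x) (int y) =
      (1-EE a b q k (x+y)*(c*q^x))*(1-EE a b q k (x+y)/(c*q^x))/((1-(c*q^x)*(d*q^y))*(1-(d*q^y)/(c*q^x)))"
    by auto
qed

lemma den_eqs:
  assumes q: "(q::complex) \<noteq> 0"
  shows "q powi (int x + int y) * c * d = (c*q^x)*(d*q^y)"
    and "q powi (int x - int y) * c / d = (c*q^x)/(d*q^y)"
    and "q powi (int y - int x) * d / c = (d*q^y)/(c*q^x)"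
  using q by (simp_all add: power_add powi_diff_nat mult_ac flip: of_nat_add)

lemma hpoly_Suc: "hpoly (Suc n) a q = hpoly n a q * [:1 + (a*q^n)^2, -(a*q^n):]"
  unfolding hpoly_def by (simp add: power_mult_distrib power_mult mult.commute)

definition cnt :: "bool list \<Rightarrow> nat" where "cnt P = length (filter id P)"

lemma poly_step:
  assumes q: "q \<noteq> 0" and c: "c \<noteq> 0" and d: "d \<noteq> 0"
    and nz: "1 - q powi (int x + int y) * c * d \<noteq> 0" "1 - q powi (int x - int y) * c / d \<noteq> 0"
        "1 - q powi (int y - int x) * d / c \<noteq> 0"
  shows "[:1 + (EE a b q k (x+y))^2, - EE a b q k (x+y):] * (hpoly x c q * hpoly y d q) =
     smult (step_wt a b c d q k (x+y<k) True (int x) (int y)) (hpoly (Suc x) c q * hpoly y d q)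
   + smult (step_wt a b c d q k (x+y<k) False (int x) (int y)) (hpoly x c q * hpoly (Suc y) d q)"
proof -
  define u where "u = c*q^x"
  define v where "v = d*q^y"
  define e where "e = EE a b q k (x+y)"
  have u: "u \<noteq> 0" "v \<noteq> 0" using q c d by (simp_all add: u_def v_def)
  have nz': "1 - u*v \<noteq> 0" "1 - u/v \<noteq> 0" "1 - v/u \<noteq> 0"
    using nz unfolding den_eqs[OF q] u_def v_def by auto
  have L: "[:1+e^2, -e:] = smult ((1-e*v)*(1-e/v)/((1-u*v)*(1-u/v))) [:1+u^2,-u:]
          + smult ((1-e*u)*(1-e/u)/((1-u*v)*(1-v/u))) [:1+v^2,-v:]"
    by (rule lin_step[OF u nz'])
  have eq1: "\<And>U::complex poly. hpoly x c q * U * hpoly y d q = U * (hpoly x c q * hpoly y d q)"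
    by (simp only: mult_ac)
  have eq2: "\<And>U::complex poly. hpoly x c q * (hpoly y d q * U) = U * (hpoly x c q * hpoly y d q)"
    by (simp only: mult_ac)
  show ?thesis
    unfolding wt_lemma[OF q c d] hpoly_Suc
    unfolding u_def[symmetric] v_def[symmetric] e_def[symmetric] L
    by (simp only: distrib_right mult_smult_left eq1 eq2)
qed

lemma sx_snoc: "i \<le> length P \<Longrightarrow> sx (P@[s]) i = sx P i"
  unfolding sx_def by simp
lemma sy_snoc: "i \<le> length P \<Longrightarrow> sy (P@[s]) i = sy P i"
  unfolding sy_def using sx_snoc by simp

lemma path_wt_snoc:
  "path_wt a b c d q k (P@[s]) = path_wt a b c d q k P *
     step_wt a b c d q k (length P < k) s (int (cnt P)) (int (length P - cnt P))"
proof -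
  have sxl: "sx P (length P) = int (cnt P)" unfolding sx_def cnt_def by simp
  have syl: "sy P (length P) = int (length P - cnt P)"
    unfolding sy_def sxl cnt_def using length_filter_le[of id P] by simp
  have "(\<Prod>i<length P. step_wt a b c d q k (i < k) ((P@[s]) ! i) (sx (P@[s]) i) (sy (P@[s]) i))
     = (\<Prod>i<length P. step_wt a b c d q k (i < k) (P ! i) (sx P i) (sy P i))"
    by (rule prod.cong) (auto simp: sx_snoc sy_snoc nth_append)
  then show ?thesis
    unfolding path_wt_def by (simp add: sx_snoc sy_snoc sxl syl)
qed

lemma lists_Suc_eq: "{P::bool list. length P = Suc n} =
   (\<lambda>P. P@[True]) ` {P. length P = n} \<union> (\<lambda>P. P@[False]) ` {P. length P = n}"
proof (rule set_eqI, rule iffI)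
  fix P :: "bool list" assume "P \<in> {P. length P = Suc n}"
  then have l: "length P = Suc n" by simp
  then have "P \<noteq> []" by auto
  then have P: "P = butlast P @ [last P]" by simp
  have "length (butlast P) = n" using l by simp
  then show "P \<in> (\<lambda>P. P@[True]) ` {P. length P = n} \<union> (\<lambda>P. P@[False]) ` {P. length P = n}"
    using P by (cases "last P") (auto intro: image_eqI)
qed auto

lemma sum_lists_Suc:
  "(\<Sum>P\<in>{P::bool list. length P = Suc n}. f P) = (\<Sum>P\<in>{P. length P = n}. f (P@[True]) + f (P@[False]))"
proof -
  have fin: "finite {P::bool list. length P = n}"
    using finite_lists_length_eq[of "UNIV::bool set" n] by simp
  have "(\<Sum>P\<in>{P::bool list. length P = Suc n}. f P) =
     (\<Sum>P\<in>(\<lambda>P. P@[True]) ` {P. length P = n}. f P) + (\<Sum>P\<in>(\<lambda>P. P@[False]) ` {P. length P = n}. f P)"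
    unfolding lists_Suc_eq by (rule sum.union_disjoint) (use fin in auto)
  also have "\<dots> = (\<Sum>P\<in>{P. length P = n}. f (P@[True])) + (\<Sum>P\<in>{P. length P = n}. f (P@[False]))"
    by (simp add: sum.reindex inj_on_def)
  finally show ?thesis by (simp add: sum.distrib)
qed

lemma main_ind:
  fixes a b c d q :: complex and N k n :: nat
  assumes q: "q \<noteq> 0" and c: "c \<noteq> 0" and d: "d \<noteq> 0"
    and denoms: "\<And>x y :: int. 0 \<le> x \<Longrightarrow> 0 \<le> y \<Longrightarrow> x + y < int N \<Longrightarrow>
        (1 - q powi (x + y) * c * d) \<noteq> 0 \<and> (1 - q powi (x - y) * c / d) \<noteq> 0
        \<and> (1 - q powi (y - x) * d / c) \<noteq> 0"
  shows "n \<le> N \<Longrightarrow> (\<Prod>i<n. [:1 + (EE a b q k i)^2, - EE a b q k i:]) =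
    (\<Sum>P\<in>{P. length P = n}. smult (path_wt a b c d q k P) (hpoly (cnt P) c q * hpoly (n - cnt P) d q))"
proof (induction n)
  case 0
  show ?case by (simp add: path_wt_def hpoly_def cnt_def)
next
  case (Suc n)
  have IH: "(\<Prod>i<n. [:1 + (EE a b q k i)^2, - EE a b q k i:]) =
    (\<Sum>P\<in>{P. length P = n}. smult (path_wt a b c d q k P) (hpoly (cnt P) c q * hpoly (n - cnt P) d q))"
    using Suc by simp
  have step: "smult (path_wt a b c d q k P) (hpoly (cnt P) c q * hpoly (n - cnt P) d q) * [:1 + (EE a b q k n)^2, - EE a b q k n:]
     = smult (path_wt a b c d q k (P@[True])) (hpoly (cnt (P@[True])) c q * hpoly (Suc n - cnt (P@[True])) d q)
     + smult (path_wt a b c d q k (P@[False])) (hpoly (cnt (P@[False])) c q * hpoly (Suc n - cnt (P@[False])) d q)"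
    if P: "P \<in> {P. length P = n}" for P
  proof -
    define x where "x = cnt P"
    define y where "y = n - x"
    have xn: "x \<le> n" using P length_filter_le[of id P] unfolding x_def cnt_def by simp
    have n: "n = x + y" using xn y_def by simp
    have lt: "int x + int y < int N" using Suc.prems n by simp
    have nz: "1 - q powi (int x + int y) * c * d \<noteq> 0" "1 - q powi (int x - int y) * c / d \<noteq> 0"
        "1 - q powi (int y - int x) * d / c \<noteq> 0" using denoms[of "int x" "int y"] lt by auto
    have cT: "cnt (P@[True]) = Suc x" and cF: "cnt (P@[False]) = x" unfolding x_def cnt_def by simp_all
    have lP: "length P = x + y" using P n by simp
    have "smult (path_wt a b c d q k P) (hpoly x c q * hpoly y d q) * [:1 + (EE a b q k (x+y))^2, - EE a b q k (x+y):]
      = smult (path_wt a b c d q k P) ([:1 + (EE a b q k (x+y))^2, - EE a b q k (x+y):] * (hpoly x c q * hpoly y d q))"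
      by (metis mult_smult_left mult.commute)
    also have "\<dots> = smult (path_wt a b c d q k P * step_wt a b c d q k (x+y<k) True (int x) (int y)) (hpoly (Suc x) c q * hpoly y d q)
   + smult (path_wt a b c d q k P * step_wt a b c d q k (x+y<k) False (int x) (int y)) (hpoly x c q * hpoly (Suc y) d q)"
      unfolding poly_step[OF q c d nz] by (simp add: smult_add_right)
    finally show ?thesis
      unfolding path_wt_snoc cT cF lP x_def[symmetric] n
      by (simp add: y_def Suc_diff_le xn)
  qed
  have "(\<Prod>i<Suc n. [:1 + (EE a b q k i)^2, - EE a b q k i:]) =
     (\<Sum>P\<in>{P. length P = n}. smult (path_wt a b c d q k P) (hpoly (cnt P) c q * hpoly (n - cnt P) d q) * [:1 + (EE a b q k n)^2, - EE a b q k n:])"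
    by (simp only: prod.lessThan_Suc IH sum_distrib_right)
  also have "\<dots> = (\<Sum>P\<in>{P. length P = n}.
       smult (path_wt a b c d q k (P@[True])) (hpoly (cnt (P@[True])) c q * hpoly (Suc n - cnt (P@[True])) d q)
     + smult (path_wt a b c d q k (P@[False])) (hpoly (cnt (P@[False])) c q * hpoly (Suc n - cnt (P@[False])) d q))"
    by (rule sum.cong[OF refl step])
  also have "\<dots> = (\<Sum>P\<in>{P. length P = Suc n}. smult (path_wt a b c d q k P) (hpoly (cnt P) c q * hpoly (Suc n - cnt P) d q))"
    by (rule sum_lists_Suc[symmetric])
  finally show ?case .
qed

lemma prod_split_add: "\<And>k m::nat. (\<Prod>i<k+m. f i) = (\<Prod>i<k. f i) * (\<Prod>j<m. f (k+j))"
  subgoal for k m by (induct m) (simp_all add: mult_ac) done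

lemma hprod:
  assumes "k \<le> N"
  shows "hpoly k a q * hpoly (N - k) b q = (\<Prod>i<N. [:1 + (EE a b q k i)^2, - EE a b q k i:])"
proof -
  have "(\<Prod>i<N. [:1 + (EE a b q k i)^2, - EE a b q k i:]) =
     (\<Prod>i<k+(N-k). [:1 + (EE a b q k i)^2, - EE a b q k i:])" using assms by simp
  also have "\<dots> = (\<Prod>i<k. [:1 + (EE a b q k i)^2, - EE a b q k i:]) *
       (\<Prod>j<N-k. [:1 + (EE a b q k (k+j))^2, - EE a b q k (k+j):])"
    by (rule prod_split_add)
  also have "(\<Prod>i<k. [:1 + (EE a b q k i)^2, - EE a b q k i:]) = hpoly k a q"
    unfolding hpoly_def EE_def by (rule prod.cong) (auto simp: power_mult_distrib power_mult mult.commute)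
  also have "(\<Prod>j<N-k. [:1 + (EE a b q k (k+j))^2, - EE a b q k (k+j):]) = hpoly (N-k) b q"
    unfolding hpoly_def EE_def by (rule prod.cong) (auto simp: power_mult_distrib power_mult mult.commute)
  finally show ?thesis by simp
qed

lemma finite_paths: "finite (paths N l)"
proof -
  have "paths N l \<subseteq> {P::bool list. length P = N}" unfolding paths_def by auto
  moreover have "finite {P::bool list. length P = N}"
    using finite_lists_length_eq[of "UNIV::bool set" N] by simp
  ultimately show ?thesis by (rule finite_subset)
qed

theorem mainTheorem10:
  fixes a b c d q :: complex and N k l :: nat
  assumes "k \<le> N" and "l \<le> N"
    and "q \<noteq> 0" and "c \<noteq> 0" and "d \<noteq> 0"
    and indep: "\<And>r. (\<Sum>j\<le>N. smult (r j) (Rbasis c d N q j)) = 0 \<Longrightarrow> \<forall>j\<le>N. r j = 0"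
    and denoms: "\<And>x y :: int. 0 \<le> x \<Longrightarrow> 0 \<le> y \<Longrightarrow> x + y < int N \<Longrightarrow>
        (1 - q powi (x + y) * c * d) \<noteq> 0 \<and> (1 - q powi (x - y) * c / d) \<noteq> 0
        \<and> (1 - q powi (y - x) * d / c) \<noteq> 0"
  shows "R k l a b c d N q = (\<Sum>P\<in>paths N l. path_wt a b c d q k P)"
proof -
  define r0 where "r0 = (\<lambda>j. \<Sum>P\<in>paths N j. path_wt a b c d q k P)"
  have fin: "finite {P::bool list. length P = N}"
    using finite_lists_length_eq[of "UNIV::bool set" N] by simp
  have r0z: "\<forall>j>N. r0 j = 0"
  proof (intro allI impI)
    fix j assume "j > N"
    then have "paths N j = {}" unfolding paths_def using length_filter_le[of id] 
      by (auto dest: le_less_trans[OF length_filter_le])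
    then show "r0 j = 0" unfolding r0_def by simp
  qed
  have F: "hpoly k a q * hpoly (N - k) b q = (\<Sum>j\<le>N. smult (r0 j) (Rbasis c d N q j))"
  proof -
    have "hpoly k a q * hpoly (N - k) b q =
      (\<Sum>P\<in>{P. length P = N}. smult (path_wt a b c d q k P) (hpoly (cnt P) c q * hpoly (N - cnt P) d q))"
      unfolding hprod[OF assms(1)] by (rule main_ind[OF assms(3,4,5) denoms]) auto
    also have "\<dots> = (\<Sum>j\<le>N. \<Sum>P\<in>{P\<in>{P. length P = N}. cnt P = j}.
        smult (path_wt a b c d q k P) (hpoly (cnt P) c q * hpoly (N - cnt P) d q))"
      by (rule sum.group[symmetric]) (use fin in \<open>auto simp: cnt_def intro: length_filter_le\<close>)
    also have "\<dots> = (\<Sum>j\<le>N. smult (r0 j) (Rbasis c d N q j))"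
    proof (rule sum.cong[OF refl])
      fix j assume "j \<in> {..N}"
      have e: "{P\<in>{P. length P = N}. cnt P = j} = paths N j" unfolding paths_def cnt_def by auto
      show "(\<Sum>P\<in>{P\<in>{P. length P = N}. cnt P = j}.
        smult (path_wt a b c d q k P) (hpoly (cnt P) c q * hpoly (N - cnt P) d q)) = smult (r0 j) (Rbasis c d N q j)"
        unfolding e r0_def smult_sum Rbasis_def
        by (rule sum.cong[OF refl]) (simp add: paths_def cnt_def)
    qed
    finally show ?thesis .
  qed
  have "Rcoeffs a b c d N q k = r0"
    unfolding Rcoeffs_def
  proof (rule the_equality)
    show "(\<forall>l>N. r0 l = 0) \<and> hpoly k a q * hpoly (N - k) b q = (\<Sum>l\<le>N. smult (r0 l) (Rbasis c d N q l))"
      using r0z F by simp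
  next
    fix r assume H: "(\<forall>l>N. r l = 0) \<and> hpoly k a q * hpoly (N - k) b q = (\<Sum>l\<le>N. smult (r l) (Rbasis c d N q l))"
    have "(\<Sum>j\<le>N. smult (r j - r0 j) (Rbasis c d N q j)) = 0"
      using H F by (simp add: smult_diff_left sum_subtractf)
    then have "\<forall>j\<le>N. r j - r0 j = 0" by (rule indep)
    then show "r = r0" using H r0z by (metis eq_iff_diff_eq_0 not_le ext)
  qed
  then show ?thesis unfolding R_def r0_def by simp
qed

end
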